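(* Fix integers $n\ge 1$, $m\ge 2$ and $k\in\{0,\dots,n-1\}$, and let $\mathcal{C}^k_{ac}$ be the class of all complete acyclic $k$-bounded CP-nets over $n$ variables, each of domain size $m$, viewed as concepts over the instance space $\mathcal{X}_{swap}$. Then: (1) $\mathrm{VCD}(\mathcal{C}^{n-1}_{ac})=m^n-1$; (2) $\mathrm{VCD}(\mathcal{C}^{0}_{ac})=(m-1)n$; (3) $\mathrm{VCD}(\mathcal{C}^{k}_{ac})\ge (m-1)\mathcal{M}_k=(m-1)(n-k)m^k+m^k-1$.
   Context: Variables $V=\{v_1,\dots,v_n\}$, each $v_i$ with a finite domain $D_{v_i}$ of size $m$. An outcome is an assignment of a value to every variable; $\mathcal{O}$ is the set of outcomes, and for $X\subseteq V$, $\mathcal{O}_X$ is the set of assignments to $X$ and $o[X]$ the projection of $o$ onto $X$. A CP-net $N$ specifies for each $v_i$ a parent set $Pa(v_i)\subseteq V\setminus\{v_i\}$ and a conditional preference table $\mathrm{CPT}(v_i)$ which, for each context $\gamma\in\mathcal{O}_{Pa(v_i)}$, either gives a strict total order $\succ^{v_i}_\gamma$ on $D_{v_i}$ (a "statement") or gives nothing. $N$ is complete if every CPT gives an order for every context. CP-nets are taken in minimal form: every parent actually affects the preferences of its child (no dummy parents). The graph of $N$ has an edge $(v_j,v_i)$ iff $v_j\in Pa(v_i)$; $N$ is acyclic if this graph is acyclic and $k$-bounded if $|Pa(v_i)|\le k$ for all $i$. For outcomes $o,o'$ differing only in $v_i$, with $\gamma=o[Pa(v_i)]$, going from $o$ to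 $o'$ is an improving flip if $\succ^{v_i}_\gamma$ is given and $o'[v_i]\succ^{v_i}_\gamma o[v_i]$; $N$ induces the relation $o'\succ o$ iff there is a nonempty finite sequence of improving flips from $o$ to $o'$. A swap is an ordered pair $x=(x.1,x.2)$ of outcomes differing in exactly one variable. $\mathcal{X}_{swap}$ is a fixed set of swaps containing, for each unordered pair of outcomes differing in exactly one variable, exactly one of the two ordered pairs (the choice is arbitrary but fixed). A CP-net $N$ is identified with the concept $c_N$ given by $c_N(x)=1$ if $x.1\succ x.2$ under $N$ and $c_N(x)=0$ otherwise. A set $Y$ of instances is shattered by a concept class if every labeling of $Y$ is realized by some concept of the class; $\mathrm{VCD}$ is the largest size of a shattered set. $\mathcal{M}_k=(n-k)m^k+\frac{m^k-1}{m-1}$. *)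

theory Defs
  imports Complex_Main
begin

text \<open>Variables are 0,...,n-1; the domain of every variable is {0..<m}.
  An outcome is a function nat => nat with values < m on variables and 0 elsewhere.\<close>

type_synonym outcome = "nat \<Rightarrow> nat"

definition outcomes :: "nat \<Rightarrow> nat \<Rightarrow> outcome set" where
  "outcomes n m = {u. (\<forall>i<n. u i < m) \<and> (\<forall>i. n \<le> i \<longrightarrow> u i = 0)}"

definition assignments :: "nat \<Rightarrow> nat set \<Rightarrow> outcome set" where
  "assignments m X = {g. (\<forall>i\<in>X. g i < m) \<and> (\<forall>i. i \<notin> X \<longrightarrow> g i = 0)}"

definition proj :: "nat set \<Rightarrow> outcome \<Rightarrow> outcome" where
  "proj X u = (\<lambda>i. if i \<in> X then u i else 0)"

text \<open>A CP-net is a pair (Pa, P): Pa i is the parent set of variable i, and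
  P i \<gamma> a b means  a \<succ>^i_\<gamma> b  in the CPT of variable i under context \<gamma>.\<close>
type_synonym cpnet = "(nat \<Rightarrow> nat set) \<times> (nat \<Rightarrow> outcome \<Rightarrow> nat \<Rightarrow> nat \<Rightarrow> bool)"

definition strict_total_order_on :: "nat \<Rightarrow> (nat \<Rightarrow> nat \<Rightarrow> bool) \<Rightarrow> bool" where
  "strict_total_order_on m R \<longleftrightarrow>
     (\<forall>a<m. \<not> R a a) \<and>
     (\<forall>a<m. \<forall>b<m. \<forall>c<m. R a b \<and> R b c \<longrightarrow> R a c) \<and>
     (\<forall>a<m. \<forall>b<m. a \<noteq> b \<longrightarrow> R a b \<or> R b a)"

text \<open>Complete CP-net in minimal form (no dummy parents).\<close>
definition complete_cpnet :: "nat \<Rightarrow> nat \<Rightarrow> cpnet \<Rightarrow> bool" where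
  "complete_cpnet n m N \<longleftrightarrow>
     (\<forall>i<n. fst N i \<subseteq> {0..<n} - {i}) \<and>
     (\<forall>i<n. \<forall>\<gamma>\<in>assignments m (fst N i). strict_total_order_on m (snd N i \<gamma>)) \<and>
     (\<forall>i<n. \<forall>j\<in>fst N i. \<exists>\<gamma>\<in>assignments m (fst N i). \<exists>\<gamma>'\<in>assignments m (fst N i).
         (\<forall>l. l \<noteq> j \<longrightarrow> \<gamma> l = \<gamma>' l) \<and>
         (\<exists>a<m. \<exists>b<m. snd N i \<gamma> a b \<noteq> snd N i \<gamma>' a b))"

definition cpnet_graph :: "nat \<Rightarrow> cpnet \<Rightarrow> (nat \<times> nat) set" where
  "cpnet_graph n N = {(j, i). i < n \<and> j \<in> fst N i}"

definition acyclic_cpnet :: "nat \<Rightarrow> cpnet \<Rightarrow> bool" where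
  "acyclic_cpnet n N \<longleftrightarrow> acyclic (cpnet_graph n N)"

definition bounded_cpnet :: "nat \<Rightarrow> nat \<Rightarrow> cpnet \<Rightarrow> bool" where
  "bounded_cpnet n k N \<longleftrightarrow> (\<forall>i<n. card (fst N i) \<le> k)"

definition differ_in_one :: "nat \<Rightarrow> outcome \<Rightarrow> outcome \<Rightarrow> bool" where
  "differ_in_one n u u' \<longleftrightarrow> (\<exists>i<n. u i \<noteq> u' i \<and> (\<forall>j. j \<noteq> i \<longrightarrow> u j = u' j))"

definition improving_flips :: "nat \<Rightarrow> nat \<Rightarrow> cpnet \<Rightarrow> (outcome \<times> outcome) set" where
  "improving_flips n m N = {(u, u'). u \<in> outcomes n m \<and> u' \<in> outcomes n m \<and>
      (\<exists>i<n. (\<forall>j. j \<noteq> i \<longrightarrow> u j = u' j) \<and> snd N i (proj (fst N i) u) (u' i) (u i))}"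

definition prefers :: "nat \<Rightarrow> nat \<Rightarrow> cpnet \<Rightarrow> outcome \<Rightarrow> outcome \<Rightarrow> bool" where
  "prefers n m N u' u \<longleftrightarrow> (u, u') \<in> (improving_flips n m N)\<^sup>+"

definition swaps :: "nat \<Rightarrow> nat \<Rightarrow> (outcome \<times> outcome) set" where
  "swaps n m = {(u, u'). u \<in> outcomes n m \<and> u' \<in> outcomes n m \<and> differ_in_one n u u'}"

definition is_Xswap :: "nat \<Rightarrow> nat \<Rightarrow> (outcome \<times> outcome) set \<Rightarrow> bool" where
  "is_Xswap n m X \<longleftrightarrow> X \<subseteq> swaps n m \<and>
     (\<forall>(a, b)\<in>swaps n m. ((a, b) \<in> X) \<noteq> ((b, a) \<in> X))"

definition concept_of :: "nat \<Rightarrow> nat \<Rightarrow> cpnet \<Rightarrow> (outcome \<times> outcome) \<Rightarrow> bool" where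
  "concept_of n m N x = prefers n m N (fst x) (snd x)"

definition C_ac :: "nat \<Rightarrow> nat \<Rightarrow> nat \<Rightarrow> ((outcome \<times> outcome) \<Rightarrow> bool) set" where
  "C_ac n m k = {concept_of n m N | N. complete_cpnet n m N \<and> acyclic_cpnet n N \<and> bounded_cpnet n k N}"

definition shatters :: "('x \<Rightarrow> bool) set \<Rightarrow> 'x set \<Rightarrow> bool" where
  "shatters C Y \<longleftrightarrow> (\<forall>L\<subseteq>Y. \<exists>c\<in>C. \<forall>y\<in>Y. c y \<longleftrightarrow> y \<in> L)"

text \<open>VC dimension of a concept class over instance space X (all relevant X here are finite).\<close>
definition VCD :: "'x set \<Rightarrow> ('x \<Rightarrow> bool) set \<Rightarrow> nat" where
  "VCD X C = Sup {card Y | Y. Y \<subseteq> X \<and> finite Y \<and> shatters C Y}"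

definition M_k :: "nat \<Rightarrow> nat \<Rightarrow> nat \<Rightarrow> real" where
  "M_k n m k = real (n - k) * real m ^ k + (real m ^ k - 1) / (real m - 1)"

end

theory Submission
  imports Defs
begin


lemma orient_path:
  assumes "(x, y) \<in> (S \<union> S\<inverse>)\<^sup>*"
  shows "\<exists>L\<subseteq>S. (x, y) \<in> (L\<inverse> \<union> (S - L))\<^sup>*"
proof -
  let ?R = "S \<union> S\<inverse>"
  define d where "d v = (LEAST k. (v, y) \<in> ?R ^^ k)" for v
  define L where "L = {(p, q) \<in> S. d p < d q}"
  let ?O = "L\<inverse> \<union> (S - L)"
  have edge: "(v, w) \<in> ?O" if "(v, w) \<in> ?R" "d w < d v" for v w
    using that unfolding L_def by auto
  have main: "\<And>v. d v = k \<Longrightarrow> (\<exists>j. (v, y) \<in> ?R ^^ j) \<Longrightarrow> (v, y) \<in> ?O\<^sup>*" for k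
  proof (induction k)
    case 0
    then have "(v, y) \<in> ?R ^^ 0" unfolding d_def by (metis (mono_tags, lifting) LeastI)
    then show ?case by simp
  next
    case (Suc k)
    then have "(v, y) \<in> ?R ^^ Suc k" unfolding d_def by (metis (mono_tags, lifting) LeastI)
    then obtain w where vw: "(v, w) \<in> ?R" and wy: "(w, y) \<in> ?R ^^ k" by (meson relpow_Suc_D2)
    have "d w \<le> k" unfolding d_def using wy by (simp add: Least_le)
    moreover have "(v, y) \<in> ?R ^^ Suc (d w)"
    proof -
      have "(w, y) \<in> ?R ^^ d w" unfolding d_def using wy by (metis (mono_tags, lifting) LeastI)
      then show ?thesis using vw by (meson relpow_Suc_I2)
    qed
    then have "d v \<le> Suc (d w)" unfolding d_def by (simp add: Least_le)
    ultimately have dw: "d w = k" using Suc.prems by simp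
    have "(w, y) \<in> ?O\<^sup>*" using Suc.IH[OF dw] wy by blast
    moreover have "(v, w) \<in> ?O" using edge[OF vw] dw Suc.prems by simp
    ultimately show ?case by (meson converse_rtrancl_into_rtrancl)
  qed
  obtain j where "(x, y) \<in> ?R ^^ j" using assms rtrancl_power by blast
  then have "(x, y) \<in> ?O\<^sup>*" using main by blast
  moreover have "L \<subseteq> S" unfolding L_def by auto
  ultimately show ?thesis by blast
qed

definition conn :: "('v \<times> 'v) set \<Rightarrow> ('v \<times> 'v) set" where
  "conn E = (E \<union> E\<inverse>)\<^sup>*"

definition comps :: "'v set \<Rightarrow> ('v \<times> 'v) set \<Rightarrow> 'v set set" where
  "comps V E = (\<lambda>v. conn E `` {v}) ` V"

lemma conn_sym: "(a, b) \<in> conn E \<Longrightarrow> (b, a) \<in> conn E"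
  unfolding conn_def
  by (metis converse_Un converse_converse rtrancl_converseI sup_commute)

lemma conn_mono: "E \<subseteq> E' \<Longrightarrow> conn E \<subseteq> conn E'"
  unfolding conn_def by (meson Un_mono converse_mono rtrancl_mono)

lemma forest_count:
  assumes "finite E" "finite V" "E \<subseteq> V \<times> V"
    and "\<forall>e\<in>E. (snd e, fst e) \<notin> conn (E - {e})"
  shows "card E + card (comps V E) \<le> card V"
  using assms
proof (induction E rule: finite_induct)
  case empty
  have "comps V {} = (\<lambda>v. {v}) ` V" unfolding comps_def conn_def by auto
  moreover have "inj_on (\<lambda>v. {v}) V" by auto
  ultimately show ?case by (simp add: card_image)
next
  case (insert e E)
  obtain a b where e: "e = (a, b)" by fastforce
  have IH: "card E + card (comps V E) \<le> card V"
  proof (rule insert.IH[OF \<open>finite V\<close>])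
    show "E \<subseteq> V \<times> V" using insert.prems by auto
    show "\<forall>e\<in>E. (snd e, fst e) \<notin> conn (E - {e})"
    proof
      fix e' assume "e' \<in> E"
      then have "(snd e', fst e') \<notin> conn (insert e E - {e'})" using insert.prems by auto
      moreover have "conn (E - {e'}) \<subseteq> conn (insert e E - {e'})" by (rule conn_mono) auto
      ultimately show "(snd e', fst e') \<notin> conn (E - {e'})" by blast
    qed
  qed
  have "insert e E - {e} = E" using insert.hyps(2) by auto
  then have ab: "(b, a) \<notin> conn E" using insert.prems(3) e by force
  have ab': "(a, b) \<notin> conn E" using ab conn_sym[of a b E] by blast
  let ?E2 = "insert e E"
  define \<phi> where "\<phi> C = conn ?E2 `` C" for C
  have sub: "conn E \<subseteq> conn ?E2" by (rule conn_mono) auto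
  have img: "\<phi> (conn E `` {v}) = conn ?E2 `` {v}" for v
  proof
    show "\<phi> (conn E `` {v}) \<subseteq> conn ?E2 `` {v}"
    proof
      fix x assume "x \<in> \<phi> (conn E `` {v})"
      then obtain y where vy: "(v, y) \<in> conn E" and yx: "(y, x) \<in> conn ?E2" unfolding \<phi>_def by blast
      have "(v, y) \<in> conn ?E2" using vy sub by blast
      then have "(v, x) \<in> conn ?E2" using yx unfolding conn_def by (rule rtrancl_trans)
      then show "x \<in> conn ?E2 `` {v}" by simp
    qed
    show "conn ?E2 `` {v} \<subseteq> \<phi> (conn E `` {v})"
    proof
      fix x assume "x \<in> conn ?E2 `` {v}"
      moreover have "v \<in> conn E `` {v}" unfolding conn_def by simp
      ultimately show "x \<in> \<phi> (conn E `` {v})" unfolding \<phi>_def by blast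
    qed
  qed
  have eq: "comps V ?E2 = \<phi> ` comps V E" unfolding comps_def image_image img ..
  have aV: "a \<in> V" "b \<in> V" using insert.prems e by auto
  have neq: "conn E `` {a} \<noteq> conn E `` {b}"
  proof
    assume "conn E `` {a} = conn E `` {b}"
    moreover have "b \<in> conn E `` {b}" unfolding conn_def by auto
    ultimately show False using ab' by auto
  qed
  have same: "\<phi> (conn E `` {a}) = \<phi> (conn E `` {b})"
  proof -
    have "(a, b) \<in> conn ?E2" unfolding conn_def e by auto
    moreover have "(b, a) \<in> conn ?E2" using calculation by (rule conn_sym)
    ultimately have "conn ?E2 `` {a} = conn ?E2 `` {b}" unfolding conn_def
      by (auto intro: rtrancl_trans)
    then show ?thesis using img by simp
  qed
  have ninj: "\<not> inj_on \<phi> (comps V E)"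
  proof
    assume inj: "inj_on \<phi> (comps V E)"
    have "conn E `` {a} \<in> comps V E" "conn E `` {b} \<in> comps V E" unfolding comps_def using aV by auto
    then show False using inj_onD[OF inj same] neq by blast
  qed
  have fin: "finite (comps V E)" unfolding comps_def using insert.prems by simp
  have "card (\<phi> ` comps V E) < card (comps V E)"
  proof -
    have "card (\<phi> ` comps V E) \<le> card (comps V E)" using fin by (rule card_image_le)
    moreover have "card (\<phi> ` comps V E) \<noteq> card (comps V E)" using ninj inj_on_iff_eq_card[OF fin] by blast
    ultimately show ?thesis by simp
  qed
  then have "card (comps V ?E2) < card (comps V E)" using eq by simp
  then show ?case using IH insert.hyps by simp
qed

lemma forest:
  assumes "finite V" "V \<noteq> {}" "E \<subseteq> V \<times> V"
    and acyc: "\<forall>L\<subseteq>E. \<forall>x. (x, x) \<notin> (L\<inverse> \<union> (E - L))\<^sup>+"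
  shows "card E \<le> card V - 1"
proof -
  have fE: "finite E" using assms(1,3) finite_subset by blast
  have "\<forall>e\<in>E. (snd e, fst e) \<notin> conn (E - {e})"
  proof (rule ballI, rule notI)
    fix e assume eE: "e \<in> E" and c: "(snd e, fst e) \<in> conn (E - {e})"
    obtain a b where e: "e = (a, b)" by fastforce
    obtain L where L: "L \<subseteq> E - {e}" and p: "(b, a) \<in> (L\<inverse> \<union> (E - {e} - L))\<^sup>*"
      using orient_path[of b a "E - {e}"] c e unfolding conn_def by auto
    have "L\<inverse> \<union> (E - {e} - L) \<subseteq> L\<inverse> \<union> (E - L)" by auto
    then have "(b, a) \<in> (L\<inverse> \<union> (E - L))\<^sup>*" using p rtrancl_mono by blast
    moreover have "(a, b) \<in> L\<inverse> \<union> (E - L)" using L eE e by auto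
    ultimately have "(a, a) \<in> (L\<inverse> \<union> (E - L))\<^sup>+" by (meson rtrancl_into_trancl2)
    then show False using acyc L by blast
  qed
  then have "card E + card (comps V E) \<le> card V" using forest_count fE assms by blast
  moreover have "comps V E \<noteq> {}" unfolding comps_def using assms(2) by simp
  moreover have "finite (comps V E)" unfolding comps_def using assms(1) by simp
  ultimately have "card (comps V E) \<ge> 1" by (simp add: Suc_leI card_gt_0_iff)
  then show ?thesis using \<open>card E + card (comps V E) \<le> card V\<close> by linarith
qed



lemma outcomes_eq: "outcomes n m = assignments m {0..<n}"
  unfolding outcomes_def assignments_def by auto

lemma assign_insert:
  assumes "x \<notin> S"
  shows "assignments m (insert x S) = (\<lambda>(g,a). g(x:=a)) ` (assignments m S \<times> {0..<m})"
proof (rule set_eqI, rule iffI)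
  fix h assume h: "h \<in> assignments m (insert x S)"
  have "h = (\<lambda>(g,a). g(x:=a)) (h(x:=0), h x)" by auto
  moreover have "(h(x:=0), h x) \<in> assignments m S \<times> {0..<m}"
    using h assms unfolding assignments_def by auto
  ultimately show "h \<in> (\<lambda>(g,a). g(x:=a)) ` (assignments m S \<times> {0..<m})" by blast
next
  fix h assume "h \<in> (\<lambda>(g,a). g(x:=a)) ` (assignments m S \<times> {0..<m})"
  then show "h \<in> assignments m (insert x S)" unfolding assignments_def by auto
qed

lemma card_assignments:
  assumes "finite S" shows "card (assignments m S) = m ^ card S"
  using assms
proof (induction S rule: finite_induct)
  case empty
  have "assignments m {} = {\<lambda>_. 0}" unfolding assignments_def by auto
  then show ?case by simp
next
  case (insert x S)
  have inj: "inj_on (\<lambda>(g,a). g(x:=a)) (assignments m S \<times> {0..<m})"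
  proof (rule inj_onI, clarify)
    fix g a g' a' assume g: "g \<in> assignments m S" "g' \<in> assignments m S"
      and eq: "g(x := a) = g'(x := a')"
    have "g x = 0" "g' x = 0" using g insert(2) unfolding assignments_def by auto
    moreover have "a = a'" using fun_cong[OF eq, of x] by simp
    moreover have "\<forall>y. y \<noteq> x \<longrightarrow> g y = g' y" using eq by (metis fun_upd_other)
    ultimately show "g = g' \<and> a = a'" by (metis ext)
  qed
  show ?case using insert assign_insert[OF insert(2), of m]
    by (simp add: card_image[OF inj] card_cartesian_product)
qed

lemma card_outcomes: "card (outcomes n m) = m ^ n"
  by (simp add: outcomes_eq card_assignments)

lemma finite_outcomes: "m \<ge> 1 \<Longrightarrow> finite (outcomes n m)"
  using card_outcomes[of n m] by (metis card_ge_0_finite one_le_power zero_less_iff_neq_zero not_one_le_zero) 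

lemma proj_assign: "u \<in> outcomes n m \<Longrightarrow> S \<subseteq> {0..<n} \<Longrightarrow> proj S u \<in> assignments m S"
  unfolding outcomes_def assignments_def proj_def by auto


definition wnet :: "nat \<Rightarrow> nat \<Rightarrow> cpnet \<Rightarrow> bool" where
  "wnet n m N \<longleftrightarrow> (\<forall>i<n. fst N i \<subseteq> {0..<n} - {i}) \<and>
     (\<forall>i<n. \<forall>\<gamma>\<in>assignments m (fst N i). strict_total_order_on m (snd N i \<gamma>)) \<and>
     acyclic (cpnet_graph n N)"

lemma complete_wnet: "complete_cpnet n m N \<Longrightarrow> acyclic_cpnet n N \<Longrightarrow> wnet n m N"
  unfolding complete_cpnet_def acyclic_cpnet_def wnet_def by blast

definition anc :: "nat \<Rightarrow> cpnet \<Rightarrow> nat \<Rightarrow> nat set" where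
  "anc n N i = {j. (j, i) \<in> (cpnet_graph n N)\<^sup>+}"

definition pos :: "nat \<Rightarrow> cpnet \<Rightarrow> nat \<Rightarrow> nat" where
  "pos n N i = card (anc n N i)"

lemma graph_sub: "wnet n m N \<Longrightarrow> cpnet_graph n N \<subseteq> {0..<n} \<times> {0..<n}"
  unfolding wnet_def cpnet_graph_def by auto

lemma anc_sub: "wnet n m N \<Longrightarrow> anc n N i \<subseteq> {0..<n}"
proof -
  assume w: "wnet n m N"
  have "(cpnet_graph n N)\<^sup>+ \<subseteq> {0..<n} \<times> {0..<n}"
    using graph_sub[OF w] by (simp add: trancl_subset_Sigma)
  then show ?thesis unfolding anc_def by auto
qed

lemma pos_le: "wnet n m N \<Longrightarrow> pos n N i \<le> n"
  unfolding pos_def using anc_sub card_mono[of "{0..<n}" "anc n N i"] by fastforce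

lemma pos_less:
  assumes w: "wnet n m N" and i: "i < n" and j: "j \<in> fst N i"
  shows "pos n N j < pos n N i"
proof -
  let ?G = "cpnet_graph n N"
  have e: "(j, i) \<in> ?G" using i j unfolding cpnet_graph_def by auto
  have "anc n N j \<subseteq> anc n N i" unfolding anc_def using e by (auto intro: trancl_into_trancl)
  moreover have "j \<in> anc n N i" using e unfolding anc_def by auto
  moreover have "j \<notin> anc n N j" using w unfolding anc_def wnet_def acyclic_def by auto
  ultimately have "anc n N j \<subset> anc n N i" by blast
  then show ?thesis unfolding pos_def
    using anc_sub[OF w] by (meson finite_atLeastLessThan psubset_card_mono rev_finite_subset)
qed

definition rk :: "nat \<Rightarrow> cpnet \<Rightarrow> nat \<Rightarrow> outcome \<Rightarrow> nat" where
  "rk m N l u = card {b. b < m \<and> snd N l (proj (fst N l) u) (u l) b}"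

lemma rk_le: "rk m N l u \<le> m"
proof -
  have "card {b. b < m \<and> snd N l (proj (fst N l) u) (u l) b} \<le> card {..<m}"
    by (rule card_mono) auto
  then show ?thesis unfolding rk_def by simp
qed

lemma flip_D:
  assumes "(u, u') \<in> improving_flips n m N"
  obtains i where "i < n" "\<forall>j. j \<noteq> i \<longrightarrow> u j = u' j"
    "snd N i (proj (fst N i) u) (u' i) (u i)" "u \<in> outcomes n m" "u' \<in> outcomes n m"
  using assms unfolding improving_flips_def by auto

lemma proj_eq_out: "\<forall>j. j \<noteq> i \<longrightarrow> u j = u' j \<Longrightarrow> i \<notin> S \<Longrightarrow> proj S u = proj S u'"
  unfolding proj_def by (rule ext) auto

lemma rk_same:
  assumes "\<forall>j. j \<noteq> i \<longrightarrow> u j = u' j" "i \<notin> fst N l" "l \<noteq> i"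
  shows "rk m N l u = rk m N l u'"
  unfolding rk_def using proj_eq_out[OF assms(1,2)] assms(1,3) by simp

lemma rk_incr:
  assumes w: "wnet n m N" and i: "i < n" and d: "\<forall>j. j \<noteq> i \<longrightarrow> u j = u' j"
    and p: "snd N i (proj (fst N i) u) (u' i) (u i)"
    and u: "u \<in> outcomes n m" and u': "u' \<in> outcomes n m"
  shows "rk m N i u < rk m N i u'"
proof -
  let ?g = "proj (fst N i) u"
  let ?R = "snd N i ?g"
  have ni: "i \<notin> fst N i" using w i unfolding wnet_def by auto
  have geq: "proj (fst N i) u' = ?g" using proj_eq_out[OF d ni] by simp
  have sub: "fst N i \<subseteq> {0..<n}" using w i unfolding wnet_def by auto
  have sto: "strict_total_order_on m ?R" using w i proj_assign[OF u sub] unfolding wnet_def by auto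
  have ui: "u i < m" "u' i < m" using u u' i unfolding outcomes_def by auto
  have "insert (u i) {b. b < m \<and> ?R (u i) b} \<subseteq> {b. b < m \<and> ?R (u' i) b}"
    using sto ui p unfolding strict_total_order_on_def by blast
  moreover have "u i \<notin> {b. b < m \<and> ?R (u i) b}" using sto ui unfolding strict_total_order_on_def by auto
  ultimately have "{b. b < m \<and> ?R (u i) b} \<subset> {b. b < m \<and> ?R (u' i) b}" by blast
  then have "card {b. b < m \<and> ?R (u i) b} < card {b. b < m \<and> ?R (u' i) b}"
    by (rule psubset_card_mono[rotated]) simp
  then show ?thesis unfolding rk_def geq by simp
qed


definition Phi :: "nat \<Rightarrow> nat \<Rightarrow> cpnet \<Rightarrow> outcome \<Rightarrow> int" where
  "Phi n m N u = (\<Sum>l<n. int (rk m N l u) * (int (n * m + 1)) ^ (n - pos n N l))"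

lemma flip_incr:
  assumes w: "wnet n m N" and f: "(u, u') \<in> improving_flips n m N"
  shows "Phi n m N u < Phi n m N u'"
proof -
  obtain i where i: "i < n" and d: "\<forall>j. j \<noteq> i \<longrightarrow> u j = u' j"
    and p: "snd N i (proj (fst N i) u) (u' i) (u i)" and u: "u \<in> outcomes n m" and u': "u' \<in> outcomes n m"
    using flip_D[OF f] by blast
  define B :: int where "B = int (n * m + 1)"
  define e where "e = n - pos n N i"
  define f where "f l = (int (rk m N l u') - int (rk m N l u)) * B ^ (n - pos n N l)" for l
  have B1: "B \<ge> 1" unfolding B_def by simp
  have diff: "Phi n m N u' - Phi n m N u = (\<Sum>l<n. f l)"
    unfolding Phi_def f_def B_def by (simp add: sum_subtractf[symmetric] algebra_simps)
  have split: "(\<Sum>l<n. f l) = f i + (\<Sum>l\<in>{..<n}-{i}. f l)"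
    using i by (simp add: sum.remove)
  have fi: "f i \<ge> B ^ e"
  proof -
    have "int (rk m N i u') - int (rk m N i u) \<ge> 1" using rk_incr[OF w i d p u u'] by simp
    moreover have "B ^ e > 0" using B1 by simp
    ultimately have "(int (rk m N i u') - int (rk m N i u)) * B ^ e \<ge> 1 * B ^ e"
      by (intro mult_right_mono) auto
    then show ?thesis unfolding f_def e_def by simp
  qed
  have zero: "f l = 0" if "l < n" "l \<noteq> i" "pos n N l \<le> pos n N i" for l
  proof -
    have "i \<notin> fst N l" using pos_less[OF w \<open>l < n\<close>] that(3) by force
    then show ?thesis unfolding f_def using rk_same[OF d _ that(2)] by simp
  qed
  show ?thesis
  proof (cases "e = 0")
    case True
    have "\<forall>l\<in>{..<n}-{i}. f l = 0"
    proof
      fix l assume "l \<in> {..<n}-{i}"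
      then show "f l = 0" using zero[of l] pos_le[OF w, of l] True unfolding e_def by auto
    qed
    then have "(\<Sum>l\<in>{..<n}-{i}. f l) = 0" by simp
    moreover have "B ^ e > 0" using B1 by simp
    ultimately show ?thesis using diff split fi by linarith
  next
    case False
    define T where "T = B ^ (e - 1)"
    have T0: "T \<ge> 1" unfolding T_def using B1 by simp
    have BT: "B ^ e = B * T" using False by (cases e) (auto simp: T_def)
    have lb: "f l \<ge> - (int m * T)" if "l \<in> {..<n}-{i}" for l
    proof (cases "pos n N l \<le> pos n N i")
      case True then show ?thesis using zero that T0 by simp
    next
      case False
      have le: "n - pos n N l \<le> e - 1" unfolding e_def using False pos_le[OF w, of l] by simp
      have "B ^ (n - pos n N l) \<le> T" unfolding T_def using B1 le by (simp add: power_increasing)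
      moreover have c2: "int (rk m N l u') - int (rk m N l u) \<ge> - int m" using rk_le[of m N l u] by simp
      moreover have c3: "B ^ (n - pos n N l) \<ge> 0" using B1 by simp
      ultimately have "(int (rk m N l u') - int (rk m N l u)) * B ^ (n - pos n N l) \<ge> - int m * B ^ (n - pos n N l)"
        using mult_right_mono[OF c2 c3] by simp
      moreover have "- int m * B ^ (n - pos n N l) \<ge> - int m * T" using \<open>B ^ (n - pos n N l) \<le> T\<close> by (simp add: mult_left_mono)
      ultimately show ?thesis unfolding f_def by simp
    qed
    have "(\<Sum>l\<in>{..<n}-{i}. f l) \<ge> (\<Sum>l\<in>{..<n}-{i}. - (int m * T))"
      by (rule sum_mono) (use lb in blast)
    moreover have "(\<Sum>l\<in>{..<n}-{i}. - (int m * T)) \<ge> - (int n * int m * T)"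
    proof -
      have "card ({..<n}-{i}) \<le> n" by (metis card_Diff1_le card_lessThan finite_lessThan)
      then have "int (card ({..<n}-{i})) * (int m * T) \<le> int n * (int m * T)"
        using T0 by (intro mult_right_mono) auto
      then show ?thesis by simp
    qed
    ultimately have "(\<Sum>l<n. f l) \<ge> B * T - int n * int m * T" using split fi BT by linarith
    moreover have "B * T - int n * int m * T = T" unfolding B_def by (simp add: algebra_simps)
    ultimately show ?thesis using diff T0 by linarith
  qed
qed

lemma trancl_incr:
  assumes w: "wnet n m N" and f: "(u, u') \<in> (improving_flips n m N)\<^sup>+"
  shows "Phi n m N u < Phi n m N u'"
  using f by (induction rule: trancl_induct) (use flip_incr[OF w] in force)+

lemma consistent: "wnet n m N \<Longrightarrow> (u, u) \<notin> (improving_flips n m N)\<^sup>+"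
  using trancl_incr by blast



lemma swap_flip1:
  assumes w: "wnet n m N" and u: "u \<in> outcomes n m" and u': "u' \<in> outcomes n m"
    and i: "i < n" and d: "\<forall>j. j \<noteq> i \<longrightarrow> u j = u' j"
    and p: "snd N i (proj (fst N i) u) (u i) (u' i)"
  shows "(u', u) \<in> improving_flips n m N"
proof -
  have ni: "i \<notin> fst N i" using w i unfolding wnet_def by auto
  have "proj (fst N i) u' = proj (fst N i) u" using proj_eq_out[OF d ni] by simp
  then show ?thesis unfolding improving_flips_def using u u' i d p by auto
qed

lemma swap_flip2:
  assumes w: "wnet n m N" and u: "u \<in> outcomes n m" and u': "u' \<in> outcomes n m"
    and i: "i < n" and ne: "u i \<noteq> u' i" and d: "\<forall>j. j \<noteq> i \<longrightarrow> u j = u' j"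
    and p: "\<not> snd N i (proj (fst N i) u) (u i) (u' i)"
  shows "(u, u') \<in> improving_flips n m N"
proof -
  have sub: "fst N i \<subseteq> {0..<n}" using w i unfolding wnet_def by auto
  have sto: "strict_total_order_on m (snd N i (proj (fst N i) u))"
    using w i proj_assign[OF u sub] unfolding wnet_def by auto
  have "u i < m" "u' i < m" using u u' i unfolding outcomes_def by auto
  then have "snd N i (proj (fst N i) u) (u' i) (u i)" using sto ne p unfolding strict_total_order_on_def by blast
  then show ?thesis unfolding improving_flips_def using u u' i d by auto
qed

lemma swap_pref:
  assumes w: "wnet n m N" and u: "u \<in> outcomes n m" and u': "u' \<in> outcomes n m"
    and i: "i < n" and ne: "u i \<noteq> u' i" and d: "\<forall>j. j \<noteq> i \<longrightarrow> u j = u' j"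
  shows "concept_of n m N (u, u') \<longleftrightarrow> snd N i (proj (fst N i) u) (u i) (u' i)"
proof
  assume c: "concept_of n m N (u, u')"
  show "snd N i (proj (fst N i) u) (u i) (u' i)"
  proof (rule ccontr)
    assume "\<not> snd N i (proj (fst N i) u) (u i) (u' i)"
    then have "(u, u') \<in> improving_flips n m N" using swap_flip2[OF w u u' i ne d] by blast
    moreover have "(u', u) \<in> (improving_flips n m N)\<^sup>+" using c unfolding concept_of_def prefers_def by simp
    ultimately have "(u, u) \<in> (improving_flips n m N)\<^sup>+" by (meson trancl_into_trancl2)
    then show False using consistent[OF w] by blast
  qed
next
  assume "snd N i (proj (fst N i) u) (u i) (u' i)"
  then have "(u', u) \<in> improving_flips n m N" using swap_flip1[OF w u u' i d] by blast
  then show "concept_of n m N (u, u')" unfolding concept_of_def prefers_def by auto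
qed

lemma swap_neg:
  assumes w: "wnet n m N" and y: "y \<in> swaps n m" and c: "\<not> concept_of n m N y"
  shows "(fst y, snd y) \<in> improving_flips n m N"
proof -
  obtain u u' where yy: "y = (u, u')" by fastforce
  have u: "u \<in> outcomes n m" "u' \<in> outcomes n m" and "differ_in_one n u u'" using y yy unfolding swaps_def by auto
  then obtain i where i: "i < n" "u i \<noteq> u' i" "\<forall>j. j \<noteq> i \<longrightarrow> u j = u' j" unfolding differ_in_one_def by blast
  have "\<not> snd N i (proj (fst N i) u) (u i) (u' i)" using swap_pref[OF w u i] c yy by simp
  then show ?thesis using swap_flip2[OF w u i] yy by simp
qed

lemma C_acD:
  assumes "c \<in> C_ac n m k"
  obtains N where "c = concept_of n m N" "complete_cpnet n m N" "acyclic_cpnet n N" "bounded_cpnet n k N"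
  using assms unfolding C_ac_def by blast

lemma swaps_sub: "swaps n m \<subseteq> outcomes n m \<times> outcomes n m"
  unfolding swaps_def by auto

lemma ub1:
  assumes m: "m \<ge> 1" and X: "is_Xswap n m X" and Y: "Y \<subseteq> X" and sh: "shatters (C_ac n m k) Y"
  shows "card Y \<le> m ^ n - 1"
proof -
  have YV: "Y \<subseteq> outcomes n m \<times> outcomes n m" using X Y swaps_sub unfolding is_Xswap_def by blast
  have YS: "Y \<subseteq> swaps n m" using X Y unfolding is_Xswap_def by blast
  have "card Y \<le> card (outcomes n m) - 1"
  proof (rule forest[OF finite_outcomes[OF m] _ YV])
    show "outcomes n m \<noteq> {}" using card_outcomes[of n m] m by (metis card.empty one_le_power not_one_le_zero)
    show "\<forall>L\<subseteq>Y. \<forall>x. (x, x) \<notin> (L\<inverse> \<union> (Y - L))\<^sup>+"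
    proof (intro allI impI)
      fix L x assume L: "L \<subseteq> Y"
      obtain c where c: "c \<in> C_ac n m k" and cy: "\<forall>y\<in>Y. c y \<longleftrightarrow> y \<in> L"
        using sh L unfolding shatters_def by blast
      obtain N where cN: "c = concept_of n m N" and w: "wnet n m N"
        using C_acD[OF c] complete_wnet by metis
      let ?F = "improving_flips n m N"
      have "L\<inverse> \<union> (Y - L) \<subseteq> ?F\<^sup>+"
      proof
        fix p assume p: "p \<in> L\<inverse> \<union> (Y - L)"
        obtain a b where pab: "p = (a, b)" by fastforce
        show "p \<in> ?F\<^sup>+"
        proof (cases "(b, a) \<in> L")
          case True
          then have "c (b, a)" using cy L by blast
          then show ?thesis using pab cN unfolding concept_of_def prefers_def by simp
        next
          case False
          then have "p \<in> Y - L" using p pab by auto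
          then have "\<not> c p" "p \<in> swaps n m" using cy YS by auto
          then have "(fst p, snd p) \<in> ?F" using swap_neg[OF w] cN by blast
          then show ?thesis by (simp add: r_into_trancl')
        qed
      qed
      then have "(L\<inverse> \<union> (Y - L))\<^sup>+ \<subseteq> (?F\<^sup>+)\<^sup>+" by (rule trancl_mono_subset)
      also have "(?F\<^sup>+)\<^sup>+ = ?F\<^sup>+" by (rule trancl_id[OF trans_trancl])
      finally have sub2: "(L\<inverse> \<union> (Y - L))\<^sup>+ \<subseteq> ?F\<^sup>+" .
      show "(x, x) \<notin> (L\<inverse> \<union> (Y - L))\<^sup>+" using consistent[OF w, of x] sub2 by blast
    qed
  qed
  then show ?thesis using card_outcomes by simp
qed


lemma bounded0_empty:
  assumes "complete_cpnet n m N" "bounded_cpnet n 0 N" "i < n"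
  shows "fst N i = {}"
proof -
  have "fst N i \<subseteq> {0..<n}" using assms unfolding complete_cpnet_def by auto
  then have "finite (fst N i)" using finite_subset by blast
  then show ?thesis using assms unfolding bounded_cpnet_def by auto
qed

lemma swap_differ_at:
  assumes "y \<in> swaps n m" "i < n" "fst y i \<noteq> snd y i"
  shows "fst y \<in> outcomes n m" "snd y \<in> outcomes n m" "\<forall>j. j \<noteq> i \<longrightarrow> fst y j = snd y j"
proof -
  show "fst y \<in> outcomes n m" "snd y \<in> outcomes n m" using assms unfolding swaps_def by auto
  obtain j where "j < n" "fst y j \<noteq> snd y j" "\<forall>l. l \<noteq> j \<longrightarrow> fst y l = snd y l"
    using assms unfolding swaps_def differ_in_one_def by auto
  then show "\<forall>j. j \<noteq> i \<longrightarrow> fst y j = snd y j" using assms(3) by metis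
qed

lemma concept0:
  assumes c: "c \<in> C_ac n m 0" and y: "y \<in> swaps n m" and i: "i < n" and ne: "fst y i \<noteq> snd y i"
  obtains R where "strict_total_order_on m R" and "\<And>y. y \<in> swaps n m \<Longrightarrow> fst y i \<noteq> snd y i \<Longrightarrow> c y \<longleftrightarrow> R (fst y i) (snd y i)"
proof -
  obtain N where cN: "c = concept_of n m N" and comp: "complete_cpnet n m N" and ac: "acyclic_cpnet n N"
    and b: "bounded_cpnet n 0 N" using C_acD[OF c] by metis
  have w: "wnet n m N" using comp ac by (rule complete_wnet)
  have e: "fst N i = {}" using bounded0_empty[OF comp b i] .
  let ?R = "snd N i (\<lambda>_. 0)"
  have pe: "proj {} u = (\<lambda>_. 0)" for u unfolding proj_def by simp
  have "(\<lambda>_. 0) \<in> assignments m {}" unfolding assignments_def by simp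
  then have "strict_total_order_on m ?R" using w i e unfolding wnet_def by metis
  moreover have "c y' \<longleftrightarrow> ?R (fst y' i) (snd y' i)" if "y' \<in> swaps n m" "fst y' i \<noteq> snd y' i" for y'
  proof -
    obtain u u' where yy: "y' = (u, u')" by fastforce
    have "concept_of n m N (u, u') \<longleftrightarrow> snd N i (proj (fst N i) u) (u i) (u' i)"
      using swap_pref[OF w _ _ i] swap_differ_at[OF that(1) i that(2)] that yy by auto
    then show ?thesis using cN yy e pe by simp
  qed
  ultimately show ?thesis using that by blast
qed

lemma ub2:
  assumes m: "m \<ge> 1" and X: "is_Xswap n m X" and Y: "Y \<subseteq> X" and sh: "shatters (C_ac n m 0) Y"
  shows "card Y \<le> (m - 1) * n"
proof -
  have YS: "Y \<subseteq> swaps n m" using X Y unfolding is_Xswap_def by blast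
  define Yi where "Yi i = {y \<in> Y. fst y i \<noteq> snd y i}" for i
  have cover: "Y \<subseteq> (\<Union>i<n. Yi i)"
  proof
    fix y assume "y \<in> Y"
    then obtain i where "i < n" "fst y i \<noteq> snd y i" using YS unfolding swaps_def differ_in_one_def by auto
    then show "y \<in> (\<Union>i<n. Yi i)" using \<open>y \<in> Y\<close> unfolding Yi_def by auto
  qed
  have "finite (outcomes n m \<times> outcomes n m)" using finite_outcomes[OF m] by simp
  then have fY: "finite Y" using YS swaps_sub by (meson finite_subset)
  have each: "card (Yi i) \<le> m - 1" if i: "i < n" for i
  proof -
    define g where "g y = (fst y i, snd y i)" for y :: "outcome \<times> outcome"
    have K: "\<exists>R. strict_total_order_on m R \<and> (\<forall>y\<in>Yi i. c y \<longleftrightarrow> R (fst y i) (snd y i))"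
      if cC: "c \<in> C_ac n m 0" for c
    proof (cases "Yi i = {}")
      case True then show ?thesis by (intro exI[of _ "\<lambda>a b. b < a"]) (auto simp add: strict_total_order_on_def)
    next
      case False
      then obtain y where "y \<in> Yi i" by blast
      then have "y \<in> swaps n m" "fst y i \<noteq> snd y i" using YS unfolding Yi_def by auto
      then obtain R where "strict_total_order_on m R" "\<And>y. y \<in> swaps n m \<Longrightarrow> fst y i \<noteq> snd y i \<Longrightarrow> c y \<longleftrightarrow> R (fst y i) (snd y i)"
        using concept0[OF cC _ i] by metis
      then show ?thesis using YS unfolding Yi_def by blast
    qed
    have inj: "inj_on g (Yi i)"
    proof (rule inj_onI, rule ccontr)
      fix y1 y2 assume y1: "y1 \<in> Yi i" and y2: "y2 \<in> Yi i" and geq: "g y1 = g y2" and ne: "y1 \<noteq> y2"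
      have "{y1} \<subseteq> Y" using y1 unfolding Yi_def by auto
      then obtain c where c: "c \<in> C_ac n m 0" and cy: "\<forall>y\<in>Y. c y \<longleftrightarrow> y \<in> {y1}"
        using sh unfolding shatters_def by blast
      obtain R where "\<forall>y\<in>Yi i. c y \<longleftrightarrow> R (fst y i) (snd y i)" using K[OF c] by blast
      then have "c y1 = c y2" using y1 y2 geq unfolding g_def by auto
      moreover have "c y1" "\<not> c y2" using cy y1 y2 ne unfolding Yi_def by auto
      ultimately show False by simp
    qed
    have EV: "g ` Yi i \<subseteq> {0..<m} \<times> {0..<m}"
      using YS i unfolding Yi_def g_def swaps_def outcomes_def by auto
    have "card (g ` Yi i) \<le> card {0..<m} - 1"
    proof (rule forest[OF _ _ EV])
      show "finite {0..<m}" by simp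
      show "{0..<m} \<noteq> {}" using m by auto
      show "\<forall>L\<subseteq>g ` Yi i. \<forall>x. (x, x) \<notin> (L\<inverse> \<union> (g ` Yi i - L))\<^sup>+"
      proof (intro allI impI)
        fix L x assume L: "L \<subseteq> g ` Yi i"
        have "{y \<in> Yi i. g y \<in> L} \<subseteq> Y" unfolding Yi_def by auto
        then obtain c where c: "c \<in> C_ac n m 0" and cy: "\<forall>y\<in>Y. c y \<longleftrightarrow> y \<in> {y \<in> Yi i. g y \<in> L}"
          using sh unfolding shatters_def by blast
        obtain R where sto: "strict_total_order_on m R" and cR: "\<forall>y\<in>Yi i. c y \<longleftrightarrow> R (fst y i) (snd y i)"
          using K[OF c] by blast
        define Q where "Q = {(a, b). a < m \<and> b < m \<and> R b a}"
        have tQ: "trans Q" using sto unfolding Q_def strict_total_order_on_def trans_def by blast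
        have "L\<inverse> \<union> (g ` Yi i - L) \<subseteq> Q"
        proof
          fix p assume p: "p \<in> L\<inverse> \<union> (g ` Yi i - L)"
          obtain a b where pab: "p = (a, b)" by fastforce
          show "p \<in> Q"
          proof (cases "(b, a) \<in> L")
            case True
            then have "(b, a) \<in> g ` Yi i" using L by (intro subsetD[OF L])
            then obtain y where y: "y \<in> Yi i" "g y = (b, a)" by (metis imageE)
            then have "c y" using cy unfolding Yi_def using True by auto
            then have "R b a" using cR y unfolding g_def by auto
            moreover have "a < m" "b < m" using EV y by auto
            ultimately show ?thesis using pab unfolding Q_def by simp
          next
            case False
            then have "p \<in> g ` Yi i - L" using p pab by auto
            then obtain y where y: "y \<in> Yi i" "g y = (a, b)" "(a, b) \<notin> L" using pab by auto
            then have "\<not> c y" using cy unfolding Yi_def by auto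
            then have "\<not> R a b" using cR y unfolding g_def by auto
            moreover have "a \<noteq> b" using y unfolding g_def Yi_def by auto
            moreover have "a < m" "b < m" using EV y by auto
            ultimately have "R b a" using sto unfolding strict_total_order_on_def by blast
            then show ?thesis using pab \<open>a < m\<close> \<open>b < m\<close> unfolding Q_def by simp
          qed
        qed
        then have "(L\<inverse> \<union> (g ` Yi i - L))\<^sup>+ \<subseteq> Q\<^sup>+" by (rule trancl_mono_subset)
        also have "Q\<^sup>+ = Q" using tQ by simp
        finally show "(x, x) \<notin> (L\<inverse> \<union> (g ` Yi i - L))\<^sup>+"
          using sto unfolding Q_def strict_total_order_on_def by blast
      qed
    qed
    then show ?thesis using card_image[OF inj] by simp
  qed
  have "(\<Union>i<n. Yi i) \<subseteq> Y" unfolding Yi_def by auto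
  then have "finite (\<Union>i<n. Yi i)" using fY by (rule finite_subset)
  then have "card Y \<le> card (\<Union>i<n. Yi i)" using cover by (rule card_mono)
  also have "\<dots> \<le> (\<Sum>i<n. card (Yi i))" by (rule card_UN_le) simp
  also have "\<dots> \<le> (\<Sum>i<n. m - 1)" by (rule sum_mono) (use each in auto)
  also have "\<dots> = (m - 1) * n" by simp
  finally show ?thesis .
qed



definition essp :: "nat \<Rightarrow> cpnet \<Rightarrow> nat \<Rightarrow> nat set" where
  "essp m N i = {j \<in> fst N i. \<exists>\<gamma>\<in>assignments m (fst N i). \<exists>\<gamma>'\<in>assignments m (fst N i).
      (\<forall>l. l \<noteq> j \<longrightarrow> \<gamma> l = \<gamma>' l) \<and> (\<exists>a<m. \<exists>b<m. snd N i \<gamma> a b \<noteq> snd N i \<gamma>' a b)}"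

definition reduce :: "nat \<Rightarrow> cpnet \<Rightarrow> cpnet" where
  "reduce m N = (essp m N, snd N)"

lemma essp_sub: "essp m N i \<subseteq> fst N i" unfolding essp_def by auto

lemma diff_sub: "\<gamma> \<in> assignments m S \<Longrightarrow> \<delta> \<in> assignments m S \<Longrightarrow> {j. \<gamma> j \<noteq> \<delta> j} \<subseteq> S"
proof
  fix j assume a: "\<gamma> \<in> assignments m S" "\<delta> \<in> assignments m S" and j: "j \<in> {j. \<gamma> j \<noteq> \<delta> j}"
  show "j \<in> S"
  proof (rule ccontr)
    assume "j \<notin> S"
    then have "\<gamma> j = 0" "\<delta> j = 0" using a unfolding assignments_def by auto
    then show False using j by simp
  qed
qed

lemma agree_aux:
  assumes fin: "finite (fst N i)"
  shows "\<And>\<gamma>. card {j. \<gamma> j \<noteq> \<delta> j} = k \<Longrightarrow> \<gamma> \<in> assignments m (fst N i) \<Longrightarrow> \<delta> \<in> assignments m (fst N i) \<Longrightarrow>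
    (\<forall>j. \<gamma> j \<noteq> \<delta> j \<longrightarrow> j \<notin> essp m N i) \<Longrightarrow> a < m \<Longrightarrow> b < m \<Longrightarrow> snd N i \<gamma> a b = snd N i \<delta> a b"
proof (induction k)
  case 0
  have "{j. \<gamma> j \<noteq> \<delta> j} \<subseteq> fst N i" using diff_sub "0.prems"(2,3) by blast
  then have "finite {j. \<gamma> j \<noteq> \<delta> j}" using fin finite_subset by blast
  then have "{j. \<gamma> j \<noteq> \<delta> j} = {}" using "0.prems"(1) by simp
  then have "\<gamma> = \<delta>" by auto
  then show ?case by simp
next
  case (Suc k)
  have Dsub: "{j. \<gamma> j \<noteq> \<delta> j} \<subseteq> fst N i" using diff_sub Suc.prems(2,3) by blast
  then have finD: "finite {j. \<gamma> j \<noteq> \<delta> j}" using fin finite_subset by blast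
  have "{j. \<gamma> j \<noteq> \<delta> j} \<noteq> {}" using Suc.prems(1) by (metis card.empty nat.distinct(1))
  then obtain j where j: "\<gamma> j \<noteq> \<delta> j" by auto
  define \<gamma>1 where "\<gamma>1 = \<gamma>(j := \<delta> j)"
  have jN: "j \<in> fst N i" using Dsub j by auto
  have g1: "\<gamma>1 \<in> assignments m (fst N i)" using Suc.prems(2,3) jN unfolding assignments_def \<gamma>1_def by auto
  have D1: "{l. \<gamma>1 l \<noteq> \<delta> l} = {l. \<gamma> l \<noteq> \<delta> l} - {j}" unfolding \<gamma>1_def by auto
  have c1: "card {l. \<gamma>1 l \<noteq> \<delta> l} = k" using Suc.prems(1) j finD unfolding D1 by simp
  have "\<forall>l. \<gamma>1 l \<noteq> \<delta> l \<longrightarrow> l \<notin> essp m N i" using Suc.prems(4) unfolding \<gamma>1_def by auto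
  then have "snd N i \<gamma>1 a b = snd N i \<delta> a b" using Suc.IH[OF c1 g1 Suc.prems(3)] Suc.prems(5,6) by blast
  moreover have "snd N i \<gamma> a b = snd N i \<gamma>1 a b"
  proof (rule ccontr)
    assume "snd N i \<gamma> a b \<noteq> snd N i \<gamma>1 a b"
    moreover have "\<forall>l. l \<noteq> j \<longrightarrow> \<gamma> l = \<gamma>1 l" unfolding \<gamma>1_def by simp
    ultimately have "j \<in> essp m N i" unfolding essp_def using jN Suc.prems(2,5,6) g1 by blast
    then show False using Suc.prems(4) j by blast
  qed
  ultimately show ?case by simp
qed

lemma agree:
  assumes "finite (fst N i)" "\<gamma> \<in> assignments m (fst N i)" "\<delta> \<in> assignments m (fst N i)"
    "\<forall>j. \<gamma> j \<noteq> \<delta> j \<longrightarrow> j \<notin> essp m N i" "a < m" "b < m"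
  shows "snd N i \<gamma> a b = snd N i \<delta> a b"
  using agree_aux[OF assms(1) refl assms(2-6)] .

lemma proj_agree:
  assumes w: "wnet n m N" and i: "i < n" and u: "u \<in> outcomes n m" and ab: "a < m" "b < m"
  shows "snd N i (proj (essp m N i) u) a b = snd N i (proj (fst N i) u) a b"
proof (rule agree)
  have sub: "fst N i \<subseteq> {0..<n}" using w i unfolding wnet_def by auto
  then show "finite (fst N i)" using finite_subset by blast
  show "proj (fst N i) u \<in> assignments m (fst N i)" using proj_assign[OF u sub] .
  have pos: "\<forall>j\<in>fst N i. 0 < m" using u sub unfolding outcomes_def by fastforce
  show "proj (essp m N i) u \<in> assignments m (fst N i)"
    using u sub essp_sub[of m N i] pos unfolding outcomes_def assignments_def proj_def by auto
  show "\<forall>j. proj (essp m N i) u j \<noteq> proj (fst N i) u j \<longrightarrow> j \<notin> essp m N i"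
    using essp_sub[of m N i] unfolding proj_def by auto
qed (use ab in auto)

lemma reduce_flips:
  assumes w: "wnet n m N"
  shows "improving_flips n m (reduce m N) = improving_flips n m N"
proof -
  have "snd N i (proj (essp m N i) u) (u' i) (u i) = snd N i (proj (fst N i) u) (u' i) (u i)"
    if "u \<in> outcomes n m" "u' \<in> outcomes n m" "i < n" for u u' i
    using proj_agree[OF w that(3,1)] that unfolding outcomes_def by auto
  then show ?thesis unfolding improving_flips_def reduce_def by fastforce
qed

lemma reduce_concept: "wnet n m N \<Longrightarrow> concept_of n m (reduce m N) = concept_of n m N"
  unfolding concept_of_def prefers_def using reduce_flips by (metis)

lemma reduce_C:
  assumes w: "wnet n m N" and b: "bounded_cpnet n k N" and m: "m \<ge> 1"
  shows "concept_of n m N \<in> C_ac n m k"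
proof -
  let ?N = "reduce m N"
  have fin: "finite (fst N i)" if "i < n" for i
    using w that finite_subset[of "fst N i" "{0..<n}"] unfolding wnet_def by auto
  have asub: "assignments m (essp m N i) \<subseteq> assignments m (fst N i)" for i
    using essp_sub[of m N i] m unfolding assignments_def by auto
  have comp: "complete_cpnet n m ?N"
    unfolding complete_cpnet_def
  proof (intro conjI allI impI ballI)
    fix i assume i: "i < n"
    show "fst ?N i \<subseteq> {0..<n} - {i}" using w i essp_sub[of m N i] unfolding wnet_def reduce_def by auto
  next
    fix i \<gamma> assume i: "i < n" and g: "\<gamma> \<in> assignments m (fst ?N i)"
    have "\<gamma> \<in> assignments m (fst N i)" using asub g unfolding reduce_def by auto
    then show "strict_total_order_on m (snd ?N i \<gamma>)" using w i unfolding wnet_def reduce_def by auto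
  next
    fix i j assume i: "i < n" and j: "j \<in> fst ?N i"
    then obtain \<gamma> \<gamma>' a b where g: "\<gamma> \<in> assignments m (fst N i)" "\<gamma>' \<in> assignments m (fst N i)"
      and d: "\<forall>l. l \<noteq> j \<longrightarrow> \<gamma> l = \<gamma>' l" and ab: "a < m" "b < m" and ne: "snd N i \<gamma> a b \<noteq> snd N i \<gamma>' a b"
      and jN: "j \<in> essp m N i"
      unfolding reduce_def essp_def by auto
    let ?E = "essp m N i"
    have pa: "proj ?E \<gamma> \<in> assignments m ?E" "proj ?E \<gamma>' \<in> assignments m ?E"
      using g essp_sub[of m N i] unfolding assignments_def proj_def by auto
    have e1: "snd N i (proj ?E \<gamma>) a b = snd N i \<gamma> a b"
      by (rule agree[OF fin[OF i] subsetD[OF asub pa(1)] g(1) _ ab]) (auto simp: proj_def)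
    have e2: "snd N i (proj ?E \<gamma>') a b = snd N i \<gamma>' a b"
      by (rule agree[OF fin[OF i] subsetD[OF asub pa(2)] g(2) _ ab]) (auto simp: proj_def)
    have "\<forall>l. l \<noteq> j \<longrightarrow> proj ?E \<gamma> l = proj ?E \<gamma>' l" using d unfolding proj_def by auto
    then show "\<exists>\<gamma>\<in>assignments m (fst ?N i). \<exists>\<gamma>'\<in>assignments m (fst ?N i).
         (\<forall>l. l \<noteq> j \<longrightarrow> \<gamma> l = \<gamma>' l) \<and> (\<exists>a<m. \<exists>b<m. snd ?N i \<gamma> a b \<noteq> snd ?N i \<gamma>' a b)"
      using pa e1 e2 ne ab unfolding reduce_def by (intro bexI[of _ "proj ?E \<gamma>"] bexI[of _ "proj ?E \<gamma>'"]) auto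
  qed
  have "cpnet_graph n ?N \<subseteq> cpnet_graph n N"
    unfolding cpnet_graph_def reduce_def using essp_sub by fastforce
  then have ac: "acyclic_cpnet n ?N" using w unfolding acyclic_cpnet_def wnet_def by (meson acyclic_subset)
  have bd: "bounded_cpnet n k ?N" unfolding bounded_cpnet_def
  proof (intro allI impI)
    fix i assume i: "i < n"
    have "card (essp m N i) \<le> card (fst N i)" by (rule card_mono[OF fin[OF i] essp_sub])
    then show "card (fst ?N i) \<le> k" using b i unfolding bounded_cpnet_def reduce_def by auto
  qed
  have "concept_of n m ?N \<in> C_ac n m k" unfolding C_ac_def using comp ac bd by blast
  then show ?thesis using reduce_concept[OF w] by simp
qed



definition Qp :: "nat \<Rightarrow> nat \<Rightarrow> nat set" where "Qp k i = {0..<min i k}"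

definition orient :: "(outcome \<times> outcome) set \<Rightarrow> outcome \<times> outcome \<Rightarrow> outcome \<times> outcome" where
  "orient X p = (if p \<in> X then p else (snd p, fst p))"

definition Iset :: "nat \<Rightarrow> nat \<Rightarrow> nat \<Rightarrow> (nat \<times> outcome \<times> nat) set" where
  "Iset n m k = Sigma {..<n} (\<lambda>i. assignments m (Qp k i) \<times> {1..<m})"

definition sw :: "(outcome \<times> outcome) set \<Rightarrow> nat \<times> outcome \<times> nat \<Rightarrow> outcome \<times> outcome" where
  "sw X t = (case t of (i, \<gamma>, a) \<Rightarrow> orient X (\<gamma>(i := a), \<gamma>))"

definition dec :: "outcome \<times> outcome \<Rightarrow> nat \<times> outcome \<times> nat" where
  "dec p = (let i = (LEAST j. fst p j \<noteq> snd p j) in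
     (i, if fst p i = 0 then fst p else snd p, fst p i + snd p i))"

lemma Iset_D:
  assumes "(i, \<gamma>, a) \<in> Iset n m k"
  shows "i < n" "\<gamma> \<in> assignments m (Qp k i)" "1 \<le> a" "a < m" "\<gamma> i = 0"
    "\<gamma> \<in> outcomes n m" "\<gamma>(i := a) \<in> outcomes n m"
proof -
  show i: "i < n" and g: "\<gamma> \<in> assignments m (Qp k i)" and "1 \<le> a" and a: "a < m"
    using assms unfolding Iset_def by auto
  show "\<gamma> i = 0" using g unfolding assignments_def Qp_def by auto
  show "\<gamma> \<in> outcomes n m" "\<gamma>(i := a) \<in> outcomes n m"
    using g i a unfolding assignments_def Qp_def outcomes_def by auto
qed

lemma dec_base:
  assumes "(i, \<gamma>, a) \<in> Iset n m k"
  shows "dec (\<gamma>(i := a), \<gamma>) = (i, \<gamma>, a)" "dec (\<gamma>, \<gamma>(i := a)) = (i, \<gamma>, a)"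
proof -
  have g0: "\<gamma> i = 0" and a1: "1 \<le> a" using Iset_D[OF assms] by auto
  have l1: "(LEAST j. (\<gamma>(i := a)) j \<noteq> \<gamma> j) = i"
    by (rule Least_equality) (use g0 a1 in \<open>auto split: if_splits\<close>)
  have l2: "(LEAST j. \<gamma> j \<noteq> (\<gamma>(i := a)) j) = i"
    by (rule Least_equality) (use g0 a1 in \<open>auto split: if_splits\<close>)
  show "dec (\<gamma>(i := a), \<gamma>) = (i, \<gamma>, a)" unfolding dec_def Let_def using l1 g0 a1 by simp
  show "dec (\<gamma>, \<gamma>(i := a)) = (i, \<gamma>, a)" unfolding dec_def Let_def using l2 g0 a1 by simp
qed

lemma dec_sw: "t \<in> Iset n m k \<Longrightarrow> dec (sw X t) = t"
  unfolding sw_def orient_def using dec_base by (cases t) auto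

lemma sw_in:
  assumes X: "is_Xswap n m X" and t: "t \<in> Iset n m k"
  shows "sw X t \<in> X"
proof -
  obtain i \<gamma> a where tt: "t = (i, \<gamma>, a)" by (cases t) auto
  note D = Iset_D[OF t[unfolded tt]]
  have "(\<gamma>(i := a), \<gamma>) \<in> swaps n m"
    unfolding swaps_def differ_in_one_def using D by auto
  then show ?thesis using X unfolding is_Xswap_def sw_def orient_def tt by auto
qed

lemma finite_assignments: "m \<ge> 1 \<Longrightarrow> finite S \<Longrightarrow> finite (assignments m S)"
  using card_assignments[of S m] by (metis card_ge_0_finite one_le_power zero_less_iff_neq_zero not_one_le_zero)

lemma card_Iset:
  assumes "k \<le> n" and m: "m \<ge> 1"
  shows "card (Iset n m k) = (m - 1) * (n - k) * m ^ k + m ^ k - 1"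
proof -
  have "card (Iset n m k) = (\<Sum>i<n. card (assignments m (Qp k i) \<times> {1..<m}))"
    unfolding Iset_def by (rule card_SigmaI) (auto simp: Qp_def intro!: finite_cartesian_product finite_assignments[OF m])
  also have "\<dots> = (\<Sum>i<n. m ^ min i k * (m - 1))"
    by (simp add: card_cartesian_product card_assignments Qp_def)
  also have "\<dots> = (\<Sum>i<k. m ^ i * (m - 1)) + (\<Sum>i\<in>{k..<n}. m ^ k * (m - 1))"
  proof -
    have e: "{..<n} = {..<k} \<union> {k..<n}" using assms by auto
    have "(\<Sum>i<n. m ^ min i k * (m - 1)) = (\<Sum>i\<in>{..<k}. m ^ min i k * (m - 1)) + (\<Sum>i\<in>{k..<n}. m ^ min i k * (m - 1))"
      unfolding e by (rule sum.union_disjoint) auto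
    moreover have "(\<Sum>i\<in>{..<k}. m ^ min i k * (m - 1)) = (\<Sum>i<k. m ^ i * (m - 1))"
      by (rule sum.cong) auto
    moreover have "(\<Sum>i\<in>{k..<n}. m ^ min i k * (m - 1)) = (\<Sum>i\<in>{k..<n}. m ^ k * (m - 1))"
      by (rule sum.cong) auto
    ultimately show ?thesis by simp
  qed
  also have "(\<Sum>i<k. m ^ i * (m - 1)) = m ^ k - 1"
  proof (induction k)
    case 0 then show ?case by simp
  next
    case (Suc k)
    obtain p where p: "m = Suc p" using m by (cases m) auto
    have q: "m ^ k \<ge> 1" using m by simp
    have "(\<Sum>i<Suc k. m ^ i * (m - 1)) = m ^ k - 1 + m ^ k * p" using Suc p by simp
    also have "\<dots> = m ^ Suc k - 1" using q p by (simp add: algebra_simps)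
    finally show ?case .
  qed
  also have "(\<Sum>i\<in>{k..<n}. m ^ k * (m - 1)) = (n - k) * (m ^ k * (m - 1))" by simp
  finally show ?thesis using one_le_power[OF m, of k] by (simp add: algebra_simps)
qed


lemma proj_self: "\<gamma> \<in> assignments m S \<Longrightarrow> proj S \<gamma> = \<gamma>"
  unfolding assignments_def proj_def by (rule ext) auto

lemma lb_shatter:
  assumes m: "m \<ge> 2" and X: "is_Xswap n m X"
  shows "shatters (C_ac n m k) (sw X ` Iset n m k)"
  unfolding shatters_def
proof (intro allI impI)
  fix L assume L: "L \<subseteq> sw X ` Iset n m k"
  define up where "up i \<gamma> a \<longleftrightarrow> (sw X (i, \<gamma>, a) \<in> L \<longleftrightarrow> (\<gamma>(i := a), \<gamma>) \<in> X)" for i \<gamma> a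
  define key where "key i \<gamma> a = (if a = 0 then m else if up i \<gamma> a then 2 * m + a else a)" for i \<gamma> a
  define N :: cpnet where "N = (Qp k, \<lambda>i \<gamma> a b. key i \<gamma> b < key i \<gamma> a)"
  have kinj: "a = b" if "a < m" "b < m" "key i \<gamma> a = key i \<gamma> b" for i \<gamma> a b
    using that unfolding key_def by (auto split: if_splits)
  have sto: "strict_total_order_on m (snd N i \<gamma>)" for i \<gamma>
  proof -
    have tot: "key i \<gamma> b < key i \<gamma> a \<or> key i \<gamma> a < key i \<gamma> b" if "a < m" "b < m" "a \<noteq> b" for a b
      using kinj[OF that(1,2)] that(3) nat_neq_iff by blast
    show ?thesis unfolding strict_total_order_on_def N_def snd_conv using tot by auto
  qed
  have "cpnet_graph n N \<subseteq> less_than" unfolding cpnet_graph_def N_def Qp_def by auto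
  then have "acyclic (cpnet_graph n N)" using wf_acyclic[OF wf_less_than] acyclic_subset by blast
  then have w: "wnet n m N" unfolding wnet_def using sto unfolding N_def Qp_def by auto
  have bd: "bounded_cpnet n k N" unfolding bounded_cpnet_def N_def Qp_def by auto
  have cC: "concept_of n m N \<in> C_ac n m k" using reduce_C[OF w bd] m by simp
  have "\<forall>y\<in>sw X ` Iset n m k. concept_of n m N y \<longleftrightarrow> y \<in> L"
  proof
    fix y assume "y \<in> sw X ` Iset n m k"
    then obtain i \<gamma> a where t: "(i, \<gamma>, a) \<in> Iset n m k" and y: "y = sw X (i, \<gamma>, a)" by auto
    note D = Iset_D[OF t]
    have ps: "proj (Qp k i) \<gamma> = \<gamma>" using proj_self[OF D(2)] .
    have "i \<notin> Qp k i" unfolding Qp_def by auto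
    then have ps2: "proj (Qp k i) (\<gamma>(i := a)) = \<gamma>" using ps proj_eq_out[of i "\<gamma>(i := a)" \<gamma> "Qp k i"] by simp
    have d1: "\<forall>j. j \<noteq> i \<longrightarrow> (\<gamma>(i := a)) j = \<gamma> j" by simp
    have d2: "\<forall>j. j \<noteq> i \<longrightarrow> \<gamma> j = (\<gamma>(i := a)) j" by simp
    show "concept_of n m N y \<longleftrightarrow> y \<in> L"
    proof (cases "(\<gamma>(i := a), \<gamma>) \<in> X")
      case True
      then have yy: "y = (\<gamma>(i := a), \<gamma>)" using y unfolding sw_def orient_def by simp
      have ne: "(\<gamma>(i := a)) i \<noteq> \<gamma> i" using D by simp
      have "concept_of n m N y \<longleftrightarrow> snd N i (proj (fst N i) (\<gamma>(i := a))) ((\<gamma>(i := a)) i) (\<gamma> i)"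
        unfolding yy by (rule swap_pref[OF w D(7) D(6) D(1) ne d1])
      also have "\<dots> \<longleftrightarrow> up i \<gamma> a" using ps2 D unfolding N_def key_def by auto
      also have "\<dots> \<longleftrightarrow> y \<in> L" using True y unfolding up_def by simp
      finally show ?thesis .
    next
      case False
      then have yy: "y = (\<gamma>, \<gamma>(i := a))" using y unfolding sw_def orient_def by simp
      have ne: "\<gamma> i \<noteq> (\<gamma>(i := a)) i" using D by simp
      have "concept_of n m N y \<longleftrightarrow> snd N i (proj (fst N i) \<gamma>) (\<gamma> i) ((\<gamma>(i := a)) i)"
        unfolding yy by (rule swap_pref[OF w D(6) D(7) D(1) ne d2])
      also have "\<dots> \<longleftrightarrow> \<not> up i \<gamma> a" using ps D unfolding N_def key_def by auto
      also have "\<dots> \<longleftrightarrow> y \<in> L" using False y unfolding up_def by simp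
      finally show ?thesis .
    qed
  qed
  then show "\<exists>c\<in>C_ac n m k. \<forall>y\<in>sw X ` Iset n m k. c y \<longleftrightarrow> y \<in> L" using cC by blast
qed



lemma finite_X: "m \<ge> 1 \<Longrightarrow> is_Xswap n m X \<Longrightarrow> finite X"
proof -
  assume m: "m \<ge> 1" and X: "is_Xswap n m X"
  have "finite (outcomes n m \<times> outcomes n m)" using finite_outcomes[OF m] by simp
  moreover have "X \<subseteq> outcomes n m \<times> outcomes n m" using X swaps_sub unfolding is_Xswap_def by blast
  ultimately show ?thesis using finite_subset by blast
qed

lemma vcd_ge:
  assumes m: "m \<ge> 2" and X: "is_Xswap n m X" and k: "k \<le> n"
  shows "(m - 1) * (n - k) * m ^ k + m ^ k - 1 \<le> VCD X (C_ac n m k)"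
proof -
  let ?Y = "sw X ` Iset n m k"
  let ?S = "{card Y | Y. Y \<subseteq> X \<and> finite Y \<and> shatters (C_ac n m k) Y}"
  have inj: "inj_on (sw X) (Iset n m k)" by (rule inj_on_inverseI[of _ dec]) (rule dec_sw)
  have fI: "finite (Iset n m k)"
  proof -
    have "Iset n m k \<subseteq> {..<n} \<times> (outcomes n m \<times> {0..<m})"
      unfolding Iset_def Qp_def assignments_def outcomes_def by auto
    then show ?thesis using finite_outcomes[of m n] m by (meson finite_SigmaI finite_atLeastLessThan finite_lessThan finite_subset one_le_numeral order_trans)
  qed
  have sub: "?Y \<subseteq> X" using sw_in[OF X] by blast
  have c: "card ?Y = (m - 1) * (n - k) * m ^ k + m ^ k - 1"
    using card_image[OF inj] card_Iset[OF k] m by simp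
  have "card ?Y \<in> ?S" using sub fI lb_shatter[OF m X] by blast
  moreover have "bdd_above ?S"
  proof (rule bdd_aboveI)
    fix x assume "x \<in> ?S"
    then obtain Y where "x = card Y" "Y \<subseteq> X" by blast
    then show "x \<le> card X" using finite_X[OF _ X] m by (simp add: card_mono)
  qed
  ultimately have "card ?Y \<le> Sup ?S" by (rule cSup_upper)
  then show ?thesis unfolding VCD_def c .
qed

lemma vcd_le:
  assumes ne: "\<exists>Y. Y \<subseteq> X \<and> finite Y \<and> shatters C Y"
    and b: "\<And>Y. Y \<subseteq> X \<Longrightarrow> shatters C Y \<Longrightarrow> card Y \<le> b"
  shows "VCD X C \<le> b"
  unfolding VCD_def by (rule cSup_least) (use ne b in auto)

lemma Mk_eq:
  assumes m: "m \<ge> 2"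
  shows "(real m - 1) * M_k n m k = real ((m - 1) * (n - k) * m ^ k + m ^ k - 1)"
proof -
  have m1: "real m - 1 \<noteq> 0" using m by simp
  have "(real m - 1) * M_k n m k = (real m - 1) * real (n - k) * real m ^ k + (real m ^ k - 1)"
  proof -
    have d: "(real m - 1) * ((real m ^ k - 1) / (real m - 1)) = real m ^ k - 1" using m1 by simp
    show ?thesis unfolding M_k_def distrib_left d by (simp add: mult.assoc)
  qed
  moreover have "real ((m - 1) * (n - k) * m ^ k + m ^ k - 1) = real ((m - 1) * (n - k) * m ^ k) + real (m ^ k) - 1"
  proof -
    have "1 \<le> (m - 1) * (n - k) * m ^ k + m ^ k" using m by (simp add: le_add2 trans_le_add2)
    then show ?thesis by (simp add: of_nat_diff)
  qed
  moreover have "real (m - 1) = real m - 1" using m by simp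
  ultimately show ?thesis by simp
qed

theorem theorem1:
  fixes n m k :: nat and X :: "(outcome \<times> outcome) set"
  assumes "n \<ge> 1" and "m \<ge> 2" and "k < n" and "is_Xswap n m X"
  shows "VCD X (C_ac n m (n - 1)) = m ^ n - 1 \<and>
         VCD X (C_ac n m 0) = (m - 1) * n \<and>
         real (VCD X (C_ac n m k)) \<ge> (real m - 1) * M_k n m k \<and>
         (real m - 1) * M_k n m k = real ((m - 1) * (n - k) * m ^ k + m ^ k - 1)"
proof -
  have n: "n \<ge> 1" and m: "m \<ge> 2" and k: "k < n" and X: "is_Xswap n m X" using assms by auto
  have m1: "m \<ge> 1" using m by simp
  have ex: "\<exists>Y. Y \<subseteq> X \<and> finite Y \<and> shatters (C_ac n m k') Y" for k'
  proof (intro exI conjI)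
    show "sw X ` Iset n m k' \<subseteq> X" using sw_in[OF X] by blast
    then show "finite (sw X ` Iset n m k')" using finite_X[OF m1 X] finite_subset by blast
    show "shatters (C_ac n m k') (sw X ` Iset n m k')" by (rule lb_shatter[OF m X])
  qed
  have p1: "VCD X (C_ac n m (n - 1)) = m ^ n - 1"
  proof (rule antisym)
    show "VCD X (C_ac n m (n - 1)) \<le> m ^ n - 1"
      by (rule vcd_le[OF ex]) (rule ub1[OF m1 X])
    have "(m - 1) * (n - (n - 1)) * m ^ (n - 1) + m ^ (n - 1) - 1 \<le> VCD X (C_ac n m (n - 1))"
      by (rule vcd_ge[OF m X]) simp
    moreover have "(m - 1) * (n - (n - 1)) * m ^ (n - 1) + m ^ (n - 1) = m ^ n"
    proof -
      have "n - (n - 1) = 1" using n by simp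
      moreover have "(m - 1) * m ^ (n - 1) + m ^ (n - 1) = m * m ^ (n - 1)" using m1
        by (metis Suc_diff_1 add.commute less_le_trans mult_Suc not_one_le_zero zero_less_one le_neq_implies_less)
      moreover have "m * m ^ (n - 1) = m ^ n" using n by (metis Suc_diff_1 less_le_trans power_Suc zero_less_one)
      ultimately show ?thesis by simp
    qed
    ultimately show "m ^ n - 1 \<le> VCD X (C_ac n m (n - 1))" by simp
  qed
  have p2: "VCD X (C_ac n m 0) = (m - 1) * n"
  proof (rule antisym)
    show "VCD X (C_ac n m 0) \<le> (m - 1) * n"
      by (rule vcd_le[OF ex]) (rule ub2[OF m1 X])
    show "(m - 1) * n \<le> VCD X (C_ac n m 0)" using vcd_ge[OF m X, of 0] by simp
  qed
  have p4: "(real m - 1) * M_k n m k = real ((m - 1) * (n - k) * m ^ k + m ^ k - 1)"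
    by (rule Mk_eq[OF m])
  have p3: "real (VCD X (C_ac n m k)) \<ge> (real m - 1) * M_k n m k"
    unfolding p4 using vcd_ge[OF m X, of k] k by simp
  show ?thesis using p1 p2 p3 p4 by blast
qed

end
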